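(* Let $n\ge 1$, let $c\neq 0$ be a constant, and let $X$ be a random vector in $\mathbb{R}^n$ with $X\sim N(\mathbf{0},c^2\mathbf{I}_n)$. Define $\widehat{\ell}_1(X)=\ell_1(X)/\mathbb{E}(\ell_1(X))$ and $\widehat{\ell}_2(X)=\ell_2(X)/\mathbb{E}(\ell_2(X))$, where $\ell_1(X)=\|X\|_1$ and $\ell_2(X)=\|X\|_2$. Then $$\max\left\{\mathbf{Var}_X\!\left(\frac{\widehat{\ell}_2(X)}{\widehat{\ell}_1(X)}\right),\ \mathbf{Var}_X\!\left(\frac{\widehat{\ell}_1(X)}{\widehat{\ell}_2(X)}\right)\right\}\lesssim \frac{1}{n}.$$
   Context: $\mathbf{I}_n$ is the $n\times n$ identity matrix and $N(\mathbf{0},c^2\mathbf{I}_n)$ the centered isotropic Gaussian distribution. $\|\cdot\|_1$ and $\|\cdot\|_2$ are the $\ell_1$ and Euclidean norms. The symbol $A(n)\lesssim 1/n$ means that $A(n)$ is bounded above by a quantity of order $1/n$ (up to a multiplicative constant) as $n$ grows. *)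

theory Defs
  imports "HOL-Probability.Probability"
begin

text \<open>Law of X ~ N(0, c^2 I_n) on R^n, vectors represented as functions on {..<n}
  (product of n independent centred normals with standard deviation abs c).\<close>
definition gauss_vec :: "nat \<Rightarrow> real \<Rightarrow> (nat \<Rightarrow> real) measure" where
  "gauss_vec n c = PiM {..<n} (\<lambda>_. density lborel (normal_density 0 \<bar>c\<bar>))"

definition l1 :: "nat \<Rightarrow> (nat \<Rightarrow> real) \<Rightarrow> real" where
  "l1 n x = (\<Sum>i<n. \<bar>x i\<bar>)"

definition l2 :: "nat \<Rightarrow> (nat \<Rightarrow> real) \<Rightarrow> real" where
  "l2 n x = sqrt (\<Sum>i<n. (x i)\<^sup>2)"

definition expect :: "'a measure \<Rightarrow> ('a \<Rightarrow> real) \<Rightarrow> real" where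
  "expect M f = (\<integral>x. f x \<partial>M)"

definition var :: "'a measure \<Rightarrow> ('a \<Rightarrow> real) \<Rightarrow> real" where
  "var M f = (\<integral>x. (f x - expect M f)\<^sup>2 \<partial>M)"

definition l1_hat :: "nat \<Rightarrow> real \<Rightarrow> (nat \<Rightarrow> real) \<Rightarrow> real" where
  "l1_hat n c x = l1 n x / expect (gauss_vec n c) (l1 n)"

definition l2_hat :: "nat \<Rightarrow> real \<Rightarrow> (nat \<Rightarrow> real) \<Rightarrow> real" where
  "l2_hat n c x = l2 n x / expect (gauss_vec n c) (l2 n)"

end

theory Submission
  imports Defs
begin

definition NN :: "real \<Rightarrow> real measure" where
  "NN s = density lborel (normal_density 0 s)"

definition PP :: "real \<Rightarrow> nat \<Rightarrow> (nat \<Rightarrow> real) measure" where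
  "PP s n = PiM {..<n} (\<lambda>_. NN s)"

lemma NN_prob: "0 < s \<Longrightarrow> prob_space (NN s)"
  unfolding NN_def by (rule prob_space_normal_density)

lemma NN_prod: "0 < s \<Longrightarrow> product_prob_space (\<lambda>_. NN s)"
  unfolding product_prob_space_def product_prob_space_axioms_def product_sigma_finite_def
  using NN_prob prob_space_imp_sigma_finite by blast

lemma PP_prob: "0 < s \<Longrightarrow> prob_space (PP s n)"
proof -
  assume "0 < s"
  then interpret product_prob_space "\<lambda>_. NN s" by (rule NN_prod)
  show ?thesis unfolding PP_def by (rule prob_space_PiM) (simp add: M.prob_space_axioms)
qed

lemma space_NN[simp]: "space (NN s) = UNIV" unfolding NN_def by simp
lemma sets_NN[simp, measurable_cong]: "sets (NN s) = sets borel" unfolding NN_def by simp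

lemma NN_integrable_iff: "(f::real\<Rightarrow>real) \<in> borel_measurable borel \<Longrightarrow> integrable (NN s) f \<longleftrightarrow> integrable lborel (\<lambda>x. normal_density 0 s x * f x)"
  unfolding NN_def by (subst integrable_density) auto

lemma NN_integral: "(f::real\<Rightarrow>real) \<in> borel_measurable borel \<Longrightarrow> integral\<^sup>L (NN s) f = (\<integral>x. normal_density 0 s x * f x \<partial>lborel)"
  unfolding NN_def by (subst integral_density) auto

lemma NN_int_even: "0 < s \<Longrightarrow> integrable (NN s) (\<lambda>x. x ^ (2*k))"
  using integrable_normal_moment[of s 0 "2*k"] by (simp add: NN_integrable_iff)

lemma NN_int_pow: "0 < s \<Longrightarrow> integrable (NN s) (\<lambda>x. x ^ k)"
  using integrable_normal_moment[of s 0 "k"] by (simp add: NN_integrable_iff)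

lemma NN_int_abspow: "0 < s \<Longrightarrow> integrable (NN s) (\<lambda>x. \<bar>x\<bar> ^ k)"
  using integrable_normal_moment_abs[of s 0 "k"] by (simp add: NN_integrable_iff)

lemma NN_abs1: "0 < s \<Longrightarrow> integral\<^sup>L (NN s) (\<lambda>x. \<bar>x\<bar>) = s * sqrt (2/pi)"
  using integral_normal_moment_abs_odd[of s 0 0] by (simp add: NN_integral)

lemma NN_sq: "0 < s \<Longrightarrow> integral\<^sup>L (NN s) (\<lambda>x. x\<^sup>2) = s\<^sup>2"
  using integral_normal_moment_even[of s 0 1] by (simp add: NN_integral)

lemma PP_component_integrable:
  fixes f :: "real \<Rightarrow> real"
  assumes "0 < s" "integrable (NN s) f" "i < n"
  shows "integrable (PP s n) (\<lambda>x. f (x i))"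
proof -
  interpret product_prob_space "\<lambda>_. NN s" using assms(1) by (rule NN_prod)
  have "integrable (PP s n) (\<lambda>x. \<Prod>j\<in>{..<n}. (if j = i then f else (\<lambda>_. 1)) (x j))"
    unfolding PP_def using assms
    by (intro product_integrable_prod) (auto simp: M.finite_measure_axioms finite_measure.integrable_const)
  moreover have "(\<Prod>j\<in>{..<n}. (if j = i then f else (\<lambda>_. 1)) (x j)) = f (x i)" for x
  proof -
    have "(\<lambda>j. (if j = i then f else (\<lambda>_. 1)) (x j)) = (\<lambda>j. if j = i then f (x i) else 1)"
      by auto
    then show ?thesis using assms(3) by (subst prod.cong[OF refl, of _ _ "\<lambda>j. if j = i then f (x i) else 1"]) (auto simp: fun_eq_iff)
  qed
  ultimately show ?thesis by simp
qed

lemma PP_step: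
  fixes g :: "(nat \<Rightarrow> real) \<Rightarrow> real"
  assumes s: "0 < s" and g: "integrable (PP s (Suc n)) g"
  shows "integral\<^sup>L (PP s (Suc n)) g = (\<integral>x. (\<integral>y. g (x(n:=y)) \<partial>NN s) \<partial>PP s n)"
proof -
  interpret product_prob_space "\<lambda>_. NN s" using s by (rule NN_prod)
  have e: "{..<Suc n} = insert n {..<n}" by auto
  show ?thesis using g unfolding PP_def e
    by (intro product_integral_insert) auto
qed

lemma NN_poly_int:
  assumes s: "0 < s"
  shows "integrable (NN s) (\<lambda>y. (1 + y\<^sup>2) ^ 4)"
proof -
  have e: "(1 + y\<^sup>2) ^ 4 = 1 + 4 * y^2 + 6 * y^4 + 4 * y^6 + y^8" for y :: real
    by (simp add: algebra_simps power2_eq_square power_numeral_reduce)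
  interpret prob_space "NN s" using NN_prob[OF s] .
  have p1: "prob UNIV = 1" using prob_space by simp
  show ?thesis unfolding e using s
    by (intro Bochner_Integration.integrable_add integrable_mult_right NN_int_pow[OF s] integrable_const)
qed

context
  fixes h :: "real \<Rightarrow> real" and s A :: real
  assumes s: "0 < s" and hm[measurable]: "h \<in> borel_measurable borel"
    and hb: "\<And>y. \<bar>h y\<bar> \<le> A * (1 + y\<^sup>2)" and h0: "integral\<^sup>L (NN s) h = 0"
begin

lemma A_nonneg: "0 \<le> A" using hb[of 0] by simp

lemma h_pow_int: "j \<le> 4 \<Longrightarrow> integrable (NN s) (\<lambda>y. h y ^ j)"
proof -
  assume j: "j \<le> 4"
  show ?thesis
  proof (rule Bochner_Integration.integrable_bound)
    show "integrable (NN s) (\<lambda>y. (1 + A)^4 * (1 + y\<^sup>2) ^ 4)"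
      using NN_poly_int[OF s] by (rule integrable_mult_right)
    show "(\<lambda>y. h y ^ j) \<in> borel_measurable (NN s)" by measurable
    show "AE y in NN s. norm (h y ^ j) \<le> norm ((1 + A)^4 * (1 + y\<^sup>2) ^ 4)"
    proof (rule AE_I2)
      fix y
      have "norm (h y ^ j) = \<bar>h y\<bar> ^ j" by (simp add: power_abs)
      also have "\<dots> \<le> (1 + \<bar>h y\<bar>) ^ j" by (rule power_mono) auto
      also have "\<dots> \<le> (1 + \<bar>h y\<bar>) ^ 4" by (rule power_increasing[OF j]) auto
      also have "\<dots> \<le> ((1 + A) * (1 + y\<^sup>2)) ^ 4"
      proof (rule power_mono)
        have "1 + \<bar>h y\<bar> \<le> 1 + A * (1 + y\<^sup>2)" using hb[of y] by simp
        also have "\<dots> \<le> (1 + A) * (1 + y\<^sup>2)" using A_nonneg by (simp add: algebra_simps)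
        finally show "1 + \<bar>h y\<bar> \<le> (1 + A) * (1 + y\<^sup>2)" .
      qed auto
      also have "\<dots> = norm ((1 + A)^4 * (1 + y\<^sup>2) ^ 4)" using A_nonneg
        by (simp add: power_mult_distrib abs_mult)
      finally show "norm (h y ^ j) \<le> norm ((1 + A)^4 * (1 + y\<^sup>2) ^ 4)" .
    qed
  qed
qed

definition "S n = (\<lambda>x. \<Sum>i<n. h (x i))"

lemma S_meas[measurable]: "S n \<in> borel_measurable (PP s n)"
  unfolding S_def PP_def by measurable

lemma S4_int: "integrable (PP s n) (\<lambda>x. S n x ^ 4)"
proof (rule Bochner_Integration.integrable_bound)
  show "integrable (PP s n) (\<lambda>x. real n ^ 3 * (\<Sum>i<n. h (x i) ^ 4))"
    using PP_component_integrable[OF s h_pow_int[of 4]]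
    by (intro integrable_mult_right Bochner_Integration.integrable_sum) auto
  show "(\<lambda>x. S n x ^ 4) \<in> borel_measurable (PP s n)" by measurable
  show "AE x in PP s n. norm (S n x ^ 4) \<le> norm (real n ^ 3 * (\<Sum>i<n. h (x i) ^ 4))"
  proof (rule AE_I2)
    fix x
    have a: "(S n x)\<^sup>2 \<le> (\<Sum>i<n. (h (x i))\<^sup>2) * real n"
      unfolding S_def using sum_squared_le_sum_of_squares[of "\<lambda>i. h (x i)" "{..<n}"] by simp
    have b: "(\<Sum>i<n. (h (x i))\<^sup>2)\<^sup>2 \<le> (\<Sum>i<n. ((h (x i))\<^sup>2)\<^sup>2) * real n"
      using sum_squared_le_sum_of_squares[of "\<lambda>i. (h (x i))\<^sup>2" "{..<n}"] by simp
    have "norm (S n x ^ 4) = ((S n x)\<^sup>2)\<^sup>2" by (simp add: power_even_abs)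
    also have "\<dots> \<le> ((\<Sum>i<n. (h (x i))\<^sup>2) * real n)\<^sup>2"
      using a by (intro power_mono) auto
    also have "\<dots> = (\<Sum>i<n. (h (x i))\<^sup>2)\<^sup>2 * (real n)\<^sup>2" by (simp add: power_mult_distrib)
    also have "\<dots> \<le> (\<Sum>i<n. ((h (x i))\<^sup>2)\<^sup>2) * real n * (real n)\<^sup>2"
      using b by (intro mult_right_mono) auto
    also have "\<dots> = real n ^ 3 * (\<Sum>i<n. h (x i) ^ 4)"
      by (simp add: power2_eq_square power_numeral_reduce algebra_simps)
    also have "\<dots> \<le> norm (real n ^ 3 * (\<Sum>i<n. h (x i) ^ 4))" by simp
    finally show "norm (S n x ^ 4) \<le> norm (real n ^ 3 * (\<Sum>i<n. h (x i) ^ 4))" .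
  qed
qed

lemma S_pow_int: "j \<le> 4 \<Longrightarrow> integrable (PP s n) (\<lambda>x. S n x ^ j)"
proof -
  assume j: "j \<le> 4"
  interpret prob_space "PP s n" using PP_prob[OF s] .
  show ?thesis
  proof (rule Bochner_Integration.integrable_bound)
    show "integrable (PP s n) (\<lambda>x. 1 + S n x ^ 4)"
      by (intro Bochner_Integration.integrable_add integrable_const S4_int)
    show "(\<lambda>x. S n x ^ j) \<in> borel_measurable (PP s n)" by measurable
    show "AE x in PP s n. norm (S n x ^ j) \<le> norm (1 + S n x ^ 4)"
    proof (rule AE_I2)
      fix x
      have "norm (S n x ^ j) = \<bar>S n x\<bar> ^ j" by (simp add: power_abs)
      also have "\<dots> \<le> 1 + \<bar>S n x\<bar> ^ 4"
      proof (cases "\<bar>S n x\<bar> \<le> 1")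
        case True
        then have "\<bar>S n x\<bar> ^ j \<le> 1" by (simp add: power_le_one)
        moreover have "0 \<le> \<bar>S n x\<bar> ^ 4" by simp
        ultimately show ?thesis by linarith
      next
        case False
        then have "\<bar>S n x\<bar> ^ j \<le> \<bar>S n x\<bar> ^ 4" by (intro power_increasing[OF j]) auto
        then show ?thesis by simp
      qed
      also have "\<dots> = norm (1 + S n x ^ 4)" by (simp add: power_even_abs)
      finally show "norm (S n x ^ j) \<le> norm (1 + S n x ^ 4)" .
    qed
  qed
qed


lemma S_upd: "S (Suc n) (x(n:=y)) = S n x + h y"
proof -
  have "S n (x(n:=y)) = S n x" unfolding S_def by (intro sum.cong) auto
  then show ?thesis unfolding S_def by simp
qed

lemma S_int: "integrable (PP s n) (S n)"
  using S_pow_int[of 1 n] by simp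

lemma S2_int: "integrable (PP s n) (\<lambda>x. (S n x)\<^sup>2)"
  using S_pow_int[of 2 n] by simp

definition "e2 = integral\<^sup>L (NN s) (\<lambda>y. (h y)\<^sup>2)"
definition "e3 = integral\<^sup>L (NN s) (\<lambda>y. h y ^ 3)"
definition "e4 = integral\<^sup>L (NN s) (\<lambda>y. h y ^ 4)"

lemma h_int: "integrable (NN s) h" using h_pow_int[of 1] by simp
lemma h2_int: "integrable (NN s) (\<lambda>y. (h y)\<^sup>2)" using h_pow_int[of 2] by simp
lemma h3_int: "integrable (NN s) (\<lambda>y. h y ^ 3)" using h_pow_int[of 3] by simp
lemma h4_int: "integrable (NN s) (\<lambda>y. h y ^ 4)" using h_pow_int[of 4] by simp

lemma inner1: "(\<integral>y. (a + h y) \<partial>NN s) = a"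
proof -
  interpret prob_space "NN s" using NN_prob[OF s] .
  have p1: "prob UNIV = 1" using prob_space by simp
  show ?thesis using h_int h0 by (simp add: Bochner_Integration.integral_add p1)
qed

lemma inner2: "(\<integral>y. (a + h y)\<^sup>2 \<partial>NN s) = a\<^sup>2 + e2"
proof -
  interpret prob_space "NN s" using NN_prob[OF s] .
  have p1: "prob UNIV = 1" using prob_space by simp
  have e: "(a + h y)\<^sup>2 = a\<^sup>2 + (2*a) * h y + (h y)\<^sup>2" for y by (simp add: power2_eq_square algebra_simps)
  show ?thesis unfolding e e2_def using h_int h2_int h0
    by (simp add: Bochner_Integration.integral_add p1)
qed

lemma inner4: "(\<integral>y. (a + h y) ^ 4 \<partial>NN s) = a ^ 4 + 6 * a\<^sup>2 * e2 + 4 * a * e3 + e4"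
proof -
  interpret prob_space "NN s" using NN_prob[OF s] .
  have p1: "prob UNIV = 1" using prob_space by simp
  have e: "(a + h y) ^ 4 = a ^ 4 + (4*a^3) * h y + (6*a\<^sup>2) * (h y)\<^sup>2 + (4*a) * h y ^ 3 + h y ^ 4" for y
    by (simp add: power2_eq_square power_numeral_reduce algebra_simps)
  show ?thesis unfolding e e2_def e3_def e4_def using h_int h2_int h3_int h4_int h0
    by (simp add: Bochner_Integration.integral_add p1)
qed

lemma ES1: "integral\<^sup>L (PP s n) (S n) = 0"
proof (induction n)
  case 0
  then show ?case by (simp add: S_def)
next
  case (Suc n)
  have "integral\<^sup>L (PP s (Suc n)) (S (Suc n)) = (\<integral>x. (\<integral>y. S (Suc n) (x(n:=y)) \<partial>NN s) \<partial>PP s n)"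
    by (rule PP_step[OF s S_int])
  also have "\<dots> = (\<integral>x. S n x \<partial>PP s n)" by (simp add: S_upd inner1)
  finally show ?case using Suc by simp
qed

lemma ES2: "(\<integral>x. (S n x)\<^sup>2 \<partial>PP s n) = real n * e2"
proof (induction n)
  case 0
  then show ?case by (simp add: S_def)
next
  case (Suc n)
  interpret prob_space "PP s n" using PP_prob[OF s] .
  have "(\<integral>x. (S (Suc n) x)\<^sup>2 \<partial>PP s (Suc n)) = (\<integral>x. (\<integral>y. (S (Suc n) (x(n:=y)))\<^sup>2 \<partial>NN s) \<partial>PP s n)"
    by (rule PP_step[OF s S2_int])
  also have "\<dots> = (\<integral>x. (S n x)\<^sup>2 + e2 \<partial>PP s n)" by (simp add: S_upd inner2)
  also have "\<dots> = real n * e2 + e2" using S2_int Suc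
    by (simp add: Bochner_Integration.integral_add prob_space)
  finally show ?case by (simp add: algebra_simps)
qed

lemma ES4: "(\<integral>x. (S n x) ^ 4 \<partial>PP s n) = real n * e4 + 3 * real n * (real n - 1) * e2\<^sup>2"
proof (induction n)
  case 0
  then show ?case by (simp add: S_def)
next
  case (Suc n)
  interpret prob_space "PP s n" using PP_prob[OF s] .
  have "(\<integral>x. (S (Suc n) x) ^ 4 \<partial>PP s (Suc n)) = (\<integral>x. (\<integral>y. (S (Suc n) (x(n:=y))) ^ 4 \<partial>NN s) \<partial>PP s n)"
    by (rule PP_step[OF s S4_int])
  also have "\<dots> = (\<integral>x. (S n x) ^ 4 + (6 * e2) * (S n x)\<^sup>2 + (4 * e3) * S n x + e4 \<partial>PP s n)"
    by (simp only: S_upd inner4) (simp add: algebra_simps)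
  also have "\<dots> = (real n * e4 + 3 * real n * (real n - 1) * e2\<^sup>2) + 6 * e2 * (real n * e2) + 4 * e3 * 0 + e4"
    using S4_int S2_int S_int Suc ES1 ES2
    by (simp add: Bochner_Integration.integral_add prob_space)
  finally show ?case by (simp add: algebra_simps power2_eq_square)
qed

end

lemma sq_sub_le: "(u - v)\<^sup>2 \<le> 2 * u\<^sup>2 + 2 * (v::real)\<^sup>2"
proof -
  have "2 * u\<^sup>2 + 2 * v\<^sup>2 - (u-v)\<^sup>2 = (u+v)\<^sup>2" by (simp add: power2_eq_square algebra_simps)
  moreover have "0 \<le> (u+v)\<^sup>2" by simp
  ultimately show ?thesis by linarith
qed

lemma P_core:
  fixes N m \<sigma> L1 L2 k :: real
  assumes N: "N \<ge> 1" and m: "m > 0" and sg: "\<sigma> > 0"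
    and L2: "L2 \<ge> 0" and kdef: "k = sqrt N * m / \<sigma>"
  shows "(L1 - k * L2)\<^sup>2 \<le> 2 * (L1 - N*m)\<^sup>2 + 2 * m\<^sup>2 / \<sigma>^4 * (L2\<^sup>2 - N*\<sigma>\<^sup>2)\<^sup>2"
proof -
  define d where "d = sqrt N * \<sigma>"
  have d: "d > 0" using N sg by (simp add: d_def)
  have dd: "d\<^sup>2 = N * \<sigma>\<^sup>2" using N by (simp add: d_def power_mult_distrib)
  have kd: "k * d = N * m" using N sg by (simp add: kdef d_def)
  have kk: "k\<^sup>2 = N * m\<^sup>2 / \<sigma>\<^sup>2" using N by (simp add: kdef power_mult_distrib power_divide)
  have "L1 - k * L2 = (L1 - N*m) - k * (L2 - d)" using kd by (simp add: algebra_simps)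
  then have "(L1 - k * L2)\<^sup>2 \<le> 2 * (L1 - N*m)\<^sup>2 + 2 * (k * (L2 - d))\<^sup>2"
    using sq_sub_le by metis
  also have "(k * (L2 - d))\<^sup>2 = k\<^sup>2 * (L2 - d)\<^sup>2" by (simp add: power_mult_distrib)
  also have "(L2 - d)\<^sup>2 \<le> (L2\<^sup>2 - d\<^sup>2)\<^sup>2 / d\<^sup>2"
  proof -
    have "(L2\<^sup>2 - d\<^sup>2)\<^sup>2 = (L2 - d)\<^sup>2 * (L2 + d)\<^sup>2" by (simp add: power2_eq_square algebra_simps)
    moreover have "(L2 + d)\<^sup>2 \<ge> d\<^sup>2" using L2 d by (intro power_mono) auto
    ultimately have "(L2 - d)\<^sup>2 * d\<^sup>2 \<le> (L2\<^sup>2 - d\<^sup>2)\<^sup>2"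
      by (simp add: mult_left_mono)
    then show ?thesis using d by (simp add: field_simps)
  qed
  then have "k\<^sup>2 * (L2 - d)\<^sup>2 \<le> k\<^sup>2 * ((L2\<^sup>2 - d\<^sup>2)\<^sup>2 / d\<^sup>2)" by (intro mult_left_mono) auto
  also have "k\<^sup>2 * ((L2\<^sup>2 - d\<^sup>2)\<^sup>2 / d\<^sup>2) = m\<^sup>2 / \<sigma>^4 * (L2\<^sup>2 - N*\<sigma>\<^sup>2)\<^sup>2"
    using N sg unfolding kk dd by (simp add: field_simps power2_eq_square power4_eq_xxxx)
  finally show ?thesis by simp
qed



lemma R1:
  fixes N m \<sigma> L1 L2 k :: real
  assumes N: "N \<ge> 1" and m: "m > 0" and sg: "\<sigma> > 0" and ms: "m \<le> \<sigma>"
    and L2: "L2 \<ge> 0" and L12: "L2 \<le> L1" and L21: "L1 \<le> sqrt N * L2"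
    and kdef: "k = sqrt N * m / \<sigma>"
  shows "(L1 / L2 - k)\<^sup>2 \<le> 2 * (L1 - k * L2)\<^sup>2 / (N * \<sigma>\<^sup>2) + 4 * (L2\<^sup>2 - N*\<sigma>\<^sup>2)\<^sup>2 / (N * \<sigma>^4)"
proof -
  have t1: "0 \<le> 2 * (L1 - k * L2)\<^sup>2 / (N * \<sigma>\<^sup>2)" using N sg by simp
  have t2: "0 \<le> 4 * (L2\<^sup>2 - N*\<sigma>\<^sup>2)\<^sup>2 / (N * \<sigma>^4)" using N sg by simp
  show ?thesis
  proof (cases "L2\<^sup>2 \<ge> N * \<sigma>\<^sup>2 / 2")
    case True
    have pos: "N * \<sigma>\<^sup>2 / 2 > 0" using N sg by simp
    have "L2 \<noteq> 0" using True pos by auto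
    then have L2p: "L2 > 0" using L2 by simp
    have "L1 / L2 - k = (L1 - k * L2) / L2" using L2p by (simp add: field_simps)
    then have "(L1 / L2 - k)\<^sup>2 = (L1 - k * L2)\<^sup>2 / L2\<^sup>2" by (simp add: power_divide)
    also have "\<dots> \<le> (L1 - k * L2)\<^sup>2 / (N * \<sigma>\<^sup>2 / 2)"
      using True pos L2p by (intro divide_left_mono) auto
    also have "\<dots> = 2 * (L1 - k * L2)\<^sup>2 / (N * \<sigma>\<^sup>2)" by simp
    finally show ?thesis using t2 by linarith
  next
    case False
    have sN: "sqrt N > 0" using N by simp
    have r0: "0 \<le> L1 / L2" using L2 L12 by simp
    have r1: "L1 / L2 \<le> sqrt N"
    proof (cases "L2 = 0")
      case True then show ?thesis using sN by simp
    next
      case False then show ?thesis using L2 L21 by (simp add: divide_le_eq mult.commute)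
    qed
    have k0: "0 \<le> k" using kdef m sg sN by simp
    have k1: "k \<le> sqrt N" using kdef ms sg sN by (simp add: divide_le_eq mult_left_mono)
    have "\<bar>L1 / L2 - k\<bar> \<le> sqrt N" using r0 r1 k0 k1 by linarith
    then have "(L1 / L2 - k)\<^sup>2 \<le> (sqrt N)\<^sup>2"
      by (metis abs_ge_zero power2_abs power_mono)
    also have "(sqrt N)\<^sup>2 = N" using N by simp
    also have "N \<le> 4 * (L2\<^sup>2 - N*\<sigma>\<^sup>2)\<^sup>2 / (N * \<sigma>^4)"
    proof -
      have h: "N*\<sigma>\<^sup>2 / 2 \<le> N*\<sigma>\<^sup>2 - L2\<^sup>2" using False by simp
      have "(N*\<sigma>\<^sup>2 / 2)\<^sup>2 \<le> (N*\<sigma>\<^sup>2 - L2\<^sup>2)\<^sup>2" using h N sg by (intro power_mono) auto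
      also have "\<dots> = (L2\<^sup>2 - N*\<sigma>\<^sup>2)\<^sup>2" by (simp add: power2_commute)
      finally have "(N*\<sigma>\<^sup>2 / 2)\<^sup>2 \<le> (L2\<^sup>2 - N*\<sigma>\<^sup>2)\<^sup>2" .
      then have "4 * (N*\<sigma>\<^sup>2 / 2)\<^sup>2 / (N * \<sigma>^4) \<le> 4 * (L2\<^sup>2 - N*\<sigma>\<^sup>2)\<^sup>2 / (N * \<sigma>^4)"
        using N sg by (intro divide_right_mono) auto
      moreover have "4 * (N*\<sigma>\<^sup>2 / 2)\<^sup>2 / (N * \<sigma>^4) = N" using N sg
        by (simp add: power2_eq_square power4_eq_xxxx)
      ultimately show ?thesis by simp
    qed
    finally show ?thesis using t1 by linarith
  qed
qed

lemma P1:
  fixes N m \<sigma> L1 L2 a b :: real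
  assumes N: "N \<ge> 1" and m: "m > 0" and sg: "\<sigma> > 0" and ms: "m \<le> \<sigma>"
    and L2: "L2 \<ge> 0" and L12: "L2 \<le> L1" and L21: "L1 \<le> sqrt N * L2"
    and adef: "a = N * m" and b: "b > 0" and bs: "b\<^sup>2 \<le> N * \<sigma>\<^sup>2"
  shows "((L1/a)/(L2/b) - b / a * (sqrt N * m / \<sigma>))\<^sup>2
     \<le> (4/m\<^sup>2 * (L1 - N*m)\<^sup>2 + (4/\<sigma>^4 + 4/(m\<^sup>2*\<sigma>\<^sup>2)) * (L2\<^sup>2 - N*\<sigma>\<^sup>2)\<^sup>2) / N\<^sup>2"
proof -
  define k where "k = sqrt N * m / \<sigma>"
  define X where "X = (L1 - N*m)\<^sup>2"
  define Y where "Y = (L2\<^sup>2 - N*\<sigma>\<^sup>2)\<^sup>2"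
  define Z where "Z = (L1 - k * L2)\<^sup>2"
  have a: "a > 0" using adef N m by simp
  have e0: "(L1/a)/(L2/b) = (b/a) * (L1/L2)"
    by (cases "L2 = 0") (simp_all add: field_simps)
  have e: "(L1/a)/(L2/b) - b / a * k = (b/a) * (L1/L2 - k)" unfolding e0 by (simp add: algebra_simps)
  have R: "(L1 / L2 - k)\<^sup>2 \<le> 2 * Z / (N * \<sigma>\<^sup>2) + 4 * Y / (N * \<sigma>^4)"
    unfolding Z_def Y_def by (rule R1[OF N m sg ms L2 L12 L21 k_def])
  have C: "Z \<le> 2 * X + 2 * m\<^sup>2 / \<sigma>^4 * Y"
    unfolding X_def Y_def Z_def by (rule P_core[OF N m sg L2 k_def])
  have ba: "(b/a)\<^sup>2 \<le> \<sigma>\<^sup>2 / (N * m\<^sup>2)"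
  proof -
    have "(b/a)\<^sup>2 = b\<^sup>2 / a\<^sup>2" by (simp add: power_divide)
    also have "\<dots> \<le> (N * \<sigma>\<^sup>2) / a\<^sup>2" using bs a by (intro divide_right_mono) auto
    also have "\<dots> = \<sigma>\<^sup>2 / (N * m\<^sup>2)" using adef N m by (simp add: field_simps power2_eq_square)
    finally show ?thesis .
  qed
  have "2 * Z / (N * \<sigma>\<^sup>2) \<le> 2 * (2 * X + 2 * m\<^sup>2 / \<sigma>^4 * Y) / (N * \<sigma>\<^sup>2)"
    using C N sg by (intro divide_right_mono) auto
  with R have R2: "(L1 / L2 - k)\<^sup>2 \<le> 2 * (2 * X + 2 * m\<^sup>2 / \<sigma>^4 * Y) / (N * \<sigma>\<^sup>2) + 4 * Y / (N * \<sigma>^4)"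
    by linarith
  have "((L1/a)/(L2/b) - b / a * k)\<^sup>2 = (b/a)\<^sup>2 * (L1/L2 - k)\<^sup>2" by (simp only: e power_mult_distrib)
  also have "\<dots> \<le> \<sigma>\<^sup>2 / (N * m\<^sup>2) * (2 * (2 * X + 2 * m\<^sup>2 / \<sigma>^4 * Y) / (N * \<sigma>\<^sup>2) + 4 * Y / (N * \<sigma>^4))"
    using ba R2 N by (intro mult_mono) auto
  also have "\<dots> = (4/m\<^sup>2 * X + (4/\<sigma>^4 + 4/(m\<^sup>2*\<sigma>\<^sup>2)) * Y) / N\<^sup>2"
    using N sg m by (simp add: field_simps power2_eq_square power4_eq_xxxx)
  finally show ?thesis unfolding k_def X_def Y_def .
qed


lemma P2:
  fixes N m \<sigma> L1 L2 a b :: real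
  assumes N: "N \<ge> 1" and m: "m > 0" and sg: "\<sigma> > 0" and ms: "m \<le> \<sigma>"
    and L2: "L2 \<ge> 0" and L12: "L2 \<le> L1" and L21: "L1 \<le> sqrt N * L2"
    and adef: "a = N * m" and bl: "sqrt N * m \<le> b"
  shows "((L2/b)/(L1/a) - a / b / (sqrt N * m / \<sigma>))\<^sup>2
     \<le> 8 * \<sigma>\<^sup>2 / m^4 * (L1 - N*m)\<^sup>2 / N\<^sup>2 + 8 / (m\<^sup>2 * \<sigma>\<^sup>2) * (L2\<^sup>2 - N*\<sigma>\<^sup>2)\<^sup>2 / N\<^sup>2
       + 16 * (2 + 2 * \<sigma>\<^sup>2 / m\<^sup>2) / m^4 * (L1 - N*m)^4 / N^3"
proof -
  define k where "k = sqrt N * m / \<sigma>"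
  define X where "X = (L1 - N*m)\<^sup>2"
  define X2 where "X2 = (L1 - N*m)^4"
  define Y where "Y = (L2\<^sup>2 - N*\<sigma>\<^sup>2)\<^sup>2"
  define Z where "Z = (L1 - k * L2)\<^sup>2"
  define D where "D = 2 + 2 * \<sigma>\<^sup>2 / m\<^sup>2"
  have sN: "sqrt N > 0" using N by simp
  have a: "a > 0" using adef N m by simp
  have b: "b > 0" using bl mult_pos_pos[OF sN m] by linarith
  have k: "k > 0" using sN m sg by (simp add: k_def)
  have kk: "k\<^sup>2 = N * m\<^sup>2 / \<sigma>\<^sup>2" using N by (simp add: k_def power_mult_distrib power_divide)
  have e0: "(L2/b)/(L1/a) = (a/b) * (L2/L1)"
    by (cases "L1 = 0") (simp_all add: field_simps)
  have e: "(L2/b)/(L1/a) - a / b / k = (a/b) * (L2/L1 - 1/k)" unfolding e0 by (simp add: algebra_simps)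
  have ab: "(a/b)\<^sup>2 \<le> N"
  proof -
    have "(sqrt N * m)\<^sup>2 \<le> b\<^sup>2" using bl sN m by (intro power_mono) auto
    then have b2: "N * m\<^sup>2 \<le> b\<^sup>2" using N by (simp add: power_mult_distrib)
    have "(a/b)\<^sup>2 = a\<^sup>2 / b\<^sup>2" by (simp add: power_divide)
    also have "\<dots> \<le> a\<^sup>2 / (N * m\<^sup>2)" using b2 N m b by (intro divide_left_mono) auto
    also have "\<dots> = N" using adef N m by (simp add: field_simps power2_eq_square)
    finally show ?thesis .
  qed
  have C: "Z \<le> 2 * X + 2 * m\<^sup>2 / \<sigma>^4 * Y"
    unfolding X_def Y_def Z_def by (rule P_core[OF N m sg L2 k_def])
  have t1: "0 \<le> 8 * \<sigma>\<^sup>2 / m^4 * X / N^3 + 8 / (m\<^sup>2 * \<sigma>\<^sup>2) * Y / N^3"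
    using N unfolding X_def Y_def by simp
  have t2: "0 \<le> 16 * D / m^4 * X2 / N^4"
    using N m sg unfolding X2_def D_def by (simp add: zero_le_even_power)
  have W: "(L2/L1 - 1/k)\<^sup>2 \<le> 8 * \<sigma>\<^sup>2 / m^4 * X / N^3 + 8 / (m\<^sup>2 * \<sigma>\<^sup>2) * Y / N^3 + 16 * D / m^4 * X2 / N^4"
  proof (cases "L1 \<ge> N * m / 2")
    case True
    have pos: "N * m / 2 > 0" using N m by simp
    have L1p: "L1 > 0" using True pos by linarith
    have L2p: "L2 > 0"
    proof (rule ccontr)
      assume "\<not> L2 > 0" then have "L2 = 0" using L2 by simp
      then show False using L21 L1p by simp
    qed
    have "L2/L1 - 1/k = (k * L2 - L1) / (k * L1)" using L1p k by (simp add: field_simps)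
    then have "(L2/L1 - 1/k)\<^sup>2 = Z / (k\<^sup>2 * L1\<^sup>2)"
      unfolding Z_def by (simp add: power_divide power_mult_distrib power2_commute)
    also have "\<dots> \<le> Z / (k\<^sup>2 * (N * m / 2)\<^sup>2)"
    proof (rule divide_left_mono)
      show "0 \<le> Z" unfolding Z_def by simp
      have "(N * m / 2)\<^sup>2 \<le> L1\<^sup>2" using True pos by (intro power_mono) auto
      then show "k\<^sup>2 * (N * m / 2)\<^sup>2 \<le> k\<^sup>2 * L1\<^sup>2" by (intro mult_left_mono) auto
      show "0 < k\<^sup>2 * L1\<^sup>2 * (k\<^sup>2 * (N * m / 2)\<^sup>2)" using k L1p pos by (intro mult_pos_pos) auto
    qed
    also have "\<dots> = 4 * \<sigma>\<^sup>2 * Z / (N^3 * m^4)"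
      unfolding kk using N m sg by (simp add: field_simps power2_eq_square power4_eq_xxxx power3_eq_cube)
    also have "\<dots> \<le> 4 * \<sigma>\<^sup>2 * (2 * X + 2 * m\<^sup>2 / \<sigma>^4 * Y) / (N^3 * m^4)"
      using C N m by (intro divide_right_mono mult_left_mono) auto
    also have "\<dots> = 8 * \<sigma>\<^sup>2 / m^4 * X / N^3 + 8 / (m\<^sup>2 * \<sigma>\<^sup>2) * Y / N^3"
      using N m sg by (simp add: field_simps power2_eq_square power4_eq_xxxx power3_eq_cube)
    finally show ?thesis using t2 by linarith
  next
    case False
    have q0: "0 \<le> L2/L1" using L2 L12 by simp
    have q1: "L2/L1 \<le> 1"
      by (cases "L1 = 0") (use L12 L2 in \<open>auto simp: divide_le_eq\<close>)
    have ik: "(1/k)\<^sup>2 \<le> \<sigma>\<^sup>2 / m\<^sup>2"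
    proof -
      have "(1/k)\<^sup>2 = \<sigma>\<^sup>2 / (N * m\<^sup>2)" using kk by (simp add: power_divide)
      also have "\<dots> \<le> \<sigma>\<^sup>2 / m\<^sup>2" using N m by (intro divide_left_mono) auto
      finally show ?thesis .
    qed
    have "(L2/L1 - 1/k)\<^sup>2 \<le> 2 * (L2/L1)\<^sup>2 + 2 * (1/k)\<^sup>2" by (rule sq_sub_le)
    also have "(L2/L1)\<^sup>2 \<le> 1" using q0 q1 by (simp add: power_le_one)
    then have "2 * (L2/L1)\<^sup>2 + 2 * (1/k)\<^sup>2 \<le> D" using ik unfolding D_def by linarith
    also have "D \<le> 16 * D / m^4 * X2 / N^4"
    proof -
      have D0: "D > 0" unfolding D_def using m by (simp add: add_pos_nonneg)
      have h: "N*m/2 \<le> N*m - L1" using False by simp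
      have "(N*m/2)^4 \<le> (N*m - L1)^4" using h N m by (intro power_mono) auto
      also have "\<dots> = X2" unfolding X2_def by (simp add: power4_eq_xxxx algebra_simps)
      finally have "(N*m/2)^4 \<le> X2" .
      then have "16 * D / m^4 * (N*m/2)^4 / N^4 \<le> 16 * D / m^4 * X2 / N^4"
        using N m D0 by (intro divide_right_mono mult_left_mono) auto
      moreover have "16 * D / m^4 * (N*m/2)^4 / N^4 = D" using N m
        by (simp add: power_divide power_mult_distrib)
      ultimately show ?thesis by simp
    qed
    finally show ?thesis using t1 by linarith
  qed
  have "((L2/b)/(L1/a) - a / b / k)\<^sup>2 = (a/b)\<^sup>2 * (L2/L1 - 1/k)\<^sup>2" by (simp only: e power_mult_distrib)
  also have "\<dots> \<le> N * (8 * \<sigma>\<^sup>2 / m^4 * X / N^3 + 8 / (m\<^sup>2 * \<sigma>\<^sup>2) * Y / N^3 + 16 * D / m^4 * X2 / N^4)"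
    using ab W N by (intro mult_mono) auto
  also have "\<dots> = 8 * \<sigma>\<^sup>2 / m^4 * X / N\<^sup>2 + 8 / (m\<^sup>2 * \<sigma>\<^sup>2) * Y / N\<^sup>2 + 16 * D / m^4 * X2 / N^3"
    using N by (simp add: field_simps power2_eq_square power4_eq_xxxx power3_eq_cube)
  finally show ?thesis unfolding k_def X_def Y_def X2_def D_def .
qed

lemma sq_expand:
  fixes f :: "'a \<Rightarrow> real"
  assumes P: "prob_space M" and i1: "integrable M f" and i2: "integrable M (\<lambda>x. (f x)\<^sup>2)"
  shows "(\<integral>x. (f x - t)\<^sup>2 \<partial>M) = (\<integral>x. (f x)\<^sup>2 \<partial>M) - 2*t*(\<integral>x. f x \<partial>M) + t\<^sup>2"
proof -
  interpret prob_space M by (rule P)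
  have e: "(f x - t)\<^sup>2 = ((f x)\<^sup>2 - (2*t) * f x) + t\<^sup>2" for x by (simp add: power2_eq_square algebra_simps)
  have "(\<integral>x. (f x - t)\<^sup>2 \<partial>M) = (\<integral>x. ((f x)\<^sup>2 - (2*t) * f x) + t\<^sup>2 \<partial>M)" unfolding e ..
  also have "\<dots> = (\<integral>x. ((f x)\<^sup>2 - (2*t) * f x) \<partial>M) + t\<^sup>2"
    using i1 i2 prob_space by (subst Bochner_Integration.integral_add) auto
  also have "(\<integral>x. ((f x)\<^sup>2 - (2*t) * f x) \<partial>M) = (\<integral>x. (f x)\<^sup>2 \<partial>M) - (2*t) * (\<integral>x. f x \<partial>M)"
    using i1 i2 by (subst Bochner_Integration.integral_diff) auto
  finally show ?thesis by simp
qed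

lemma var_le:
  fixes f :: "'a \<Rightarrow> real"
  assumes P: "prob_space M" and i1: "integrable M f" and i2: "integrable M (\<lambda>x. (f x)\<^sup>2)"
  shows "var M f \<le> (\<integral>x. (f x - t)\<^sup>2 \<partial>M)"
proof -
  define \<mu> where "\<mu> = (\<integral>x. f x \<partial>M)"
  have "var M f = (\<integral>x. (f x)\<^sup>2 \<partial>M) - 2*\<mu>*\<mu> + \<mu>\<^sup>2"
    unfolding var_def expect_def \<mu>_def by (rule sq_expand[OF P i1 i2])
  moreover have "(\<integral>x. (f x - t)\<^sup>2 \<partial>M) = (\<integral>x. (f x)\<^sup>2 \<partial>M) - 2*t*\<mu> + t\<^sup>2"
    unfolding \<mu>_def by (rule sq_expand[OF P i1 i2])
  moreover have "0 \<le> (\<mu> - t)\<^sup>2" by simp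
  moreover have "(\<mu> - t)\<^sup>2 = \<mu>\<^sup>2 - 2*t*\<mu> + t\<^sup>2" by (simp add: power2_eq_square algebra_simps)
  moreover have "2*\<mu>*\<mu> = 2 * \<mu>\<^sup>2" by (simp add: power2_eq_square)
  ultimately show ?thesis by linarith
qed

lemma bounded_int:
  fixes f :: "'a \<Rightarrow> real"
  assumes P: "prob_space M" and fm: "f \<in> borel_measurable M" and fb: "\<And>x. \<bar>f x\<bar> \<le> K"
  shows "integrable M f" "integrable M (\<lambda>x. (f x)\<^sup>2)"
proof -
  interpret prob_space M by (rule P)
  show "integrable M f"
  proof (rule Bochner_Integration.integrable_bound[of _ "\<lambda>_. K"])
    show "AE x in M. norm (f x) \<le> norm K"
    proof (rule AE_I2)
      fix x
      have "\<bar>f x\<bar> \<le> \<bar>K\<bar>" using fb[of x] abs_ge_self[of K] by linarith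
      then show "norm (f x) \<le> norm K" by simp
    qed
  qed (use fm in auto)
  have fb2: "\<bar>f x\<bar>\<^sup>2 \<le> K\<^sup>2" for x using fb[of x] by (intro power_mono) auto
  show "integrable M (\<lambda>x. (f x)\<^sup>2)"
  proof (rule Bochner_Integration.integrable_bound[of _ "\<lambda>_. K\<^sup>2"])
    show "AE x in M. norm ((f x)\<^sup>2) \<le> norm (K\<^sup>2)"
      using fb2 by (intro AE_I2) simp
  qed (use fm in auto)
qed

lemma sumsq_le_sqsum:
  fixes g :: "nat \<Rightarrow> real"
  assumes "\<And>i. g i \<ge> 0"
  shows "(\<Sum>i<n. (g i)\<^sup>2) \<le> (\<Sum>i<n. g i)\<^sup>2"
proof -
  have "(\<Sum>i<n. (g i)\<^sup>2) \<le> (\<Sum>i<n. g i * (\<Sum>j<n. g j))"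
  proof (rule sum_mono)
    fix i assume "i \<in> {..<n}"
    then have "g i \<le> (\<Sum>j<n. g j)" using assms by (intro member_le_sum) auto
    then show "(g i)\<^sup>2 \<le> g i * (\<Sum>j<n. g j)" using assms[of i]
      by (simp add: power2_eq_square mult_left_mono)
  qed
  also have "\<dots> = (\<Sum>i<n. g i)\<^sup>2" by (simp add: power2_eq_square sum_distrib_right)
  finally show ?thesis .
qed

lemma l2_facts:
  shows "0 \<le> l2 n x" "l2 n x \<le> l1 n x" "l1 n x \<le> sqrt (real n) * l2 n x"
    "(l2 n x)\<^sup>2 = (\<Sum>i<n. (x i)\<^sup>2)"
proof -
  have q0: "0 \<le> (\<Sum>i<n. (x i)\<^sup>2)" by (intro sum_nonneg) auto
  show "0 \<le> l2 n x" unfolding l2_def using q0 by simp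
  show "(l2 n x)\<^sup>2 = (\<Sum>i<n. (x i)\<^sup>2)" unfolding l2_def using q0 by simp
  have "(\<Sum>i<n. (x i)\<^sup>2) = (\<Sum>i<n. \<bar>x i\<bar>\<^sup>2)" by simp
  also have "\<dots> \<le> (\<Sum>i<n. \<bar>x i\<bar>)\<^sup>2" by (rule sumsq_le_sqsum) auto
  finally have "sqrt (\<Sum>i<n. (x i)\<^sup>2) \<le> sqrt ((\<Sum>i<n. \<bar>x i\<bar>)\<^sup>2)" by (rule real_sqrt_le_mono)
  also have "\<dots> = (\<Sum>i<n. \<bar>x i\<bar>)" by (simp add: sum_nonneg)
  finally show "l2 n x \<le> l1 n x" unfolding l1_def l2_def .
  have "(\<Sum>i<n. \<bar>x i\<bar>)\<^sup>2 \<le> (\<Sum>i<n. \<bar>x i\<bar>\<^sup>2) * real n"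
    using sum_squared_le_sum_of_squares[of "\<lambda>i. \<bar>x i\<bar>" "{..<n}"] by simp
  then have "sqrt ((\<Sum>i<n. \<bar>x i\<bar>)\<^sup>2) \<le> sqrt ((\<Sum>i<n. (x i)\<^sup>2) * real n)"
    by (intro real_sqrt_le_mono) simp
  then show "l1 n x \<le> sqrt (real n) * l2 n x" unfolding l1_def l2_def
    by (simp add: sum_nonneg real_sqrt_mult mult.commute)
qed

lemma abs_le_1_sq: "\<bar>y::real\<bar> \<le> 1 + y\<^sup>2"
proof -
  have "0 \<le> (\<bar>y\<bar> - 1)\<^sup>2" by simp
  also have "(\<bar>y\<bar> - 1)\<^sup>2 = y\<^sup>2 - 2 * \<bar>y\<bar> + 1" by (simp add: power2_eq_square algebra_simps)
  finally show ?thesis by simp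
qed

lemma lin2: "(p*X + q*Y)/(N::real) = (p/N)*X + (q/N)*Y"
  by (simp add: add_divide_distrib)

context
  fixes c :: real
  assumes c: "c \<noteq> 0"
begin

definition "sg = \<bar>c\<bar>"
definition "mm = sg * sqrt (2/pi)"
definition "h1 = (\<lambda>y::real. \<bar>y\<bar> - mm)"
definition "h2 = (\<lambda>y::real. y\<^sup>2 - sg\<^sup>2)"

lemma sg_pos: "sg > 0" using c by (simp add: sg_def)
lemma mm_pos: "mm > 0" using sg_pos by (simp add: mm_def)
lemma mm_le: "mm \<le> sg"
proof -
  have "2/pi \<le> 1" using pi_gt3 by simp
  then have "sqrt (2/pi) \<le> 1" by simp
  then show ?thesis unfolding mm_def using sg_pos by (simp add: mult_left_le)
qed

lemma h1m[measurable]: "h1 \<in> borel_measurable borel" unfolding h1_def by measurable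
lemma h2m[measurable]: "h2 \<in> borel_measurable borel" unfolding h2_def by measurable

lemma h1b: "\<bar>h1 y\<bar> \<le> (1 + mm) * (1 + y\<^sup>2)"
proof -
  have "\<bar>h1 y\<bar> \<le> \<bar>y\<bar> + mm" unfolding h1_def using mm_pos by simp
  also have "\<dots> \<le> (1 + y\<^sup>2) + mm * (1 + y\<^sup>2)"
  proof -
    have "mm * 1 \<le> mm * (1 + y\<^sup>2)" using mm_pos by (intro mult_left_mono) auto
    then show ?thesis using abs_le_1_sq[of y] by linarith
  qed
  also have "\<dots> = (1 + mm) * (1 + y\<^sup>2)" by (simp add: algebra_simps)
  finally show ?thesis .
qed

lemma h2b: "\<bar>h2 y\<bar> \<le> (1 + sg\<^sup>2) * (1 + y\<^sup>2)"
proof -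
  have "\<bar>h2 y\<bar> \<le> y\<^sup>2 + sg\<^sup>2" unfolding h2_def abs_le_iff
    using zero_le_power2[of y] zero_le_power2[of sg] by linarith
  also have "\<dots> \<le> (1 + sg\<^sup>2) * (1 + y\<^sup>2)" by (simp add: algebra_simps)
  finally show ?thesis .
qed

lemma h10: "integral\<^sup>L (NN sg) h1 = 0"
proof -
  interpret prob_space "NN sg" using NN_prob[OF sg_pos] .
  have p1: "prob UNIV = 1" using prob_space by simp
  have "integrable (NN sg) (\<lambda>y. \<bar>y\<bar>)" using NN_int_abspow[OF sg_pos, of 1] by simp
  then show ?thesis unfolding h1_def
    using NN_abs1[OF sg_pos] by (simp add: Bochner_Integration.integral_diff p1 mm_def)
qed

lemma h20: "integral\<^sup>L (NN sg) h2 = 0"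
proof -
  interpret prob_space "NN sg" using NN_prob[OF sg_pos] .
  have p1: "prob UNIV = 1" using prob_space by simp
  have "integrable (NN sg) (\<lambda>y. y\<^sup>2)" using NN_int_pow[OF sg_pos, of 2] by simp
  then show ?thesis unfolding h2_def
    using NN_sq[OF sg_pos] by (simp add: Bochner_Integration.integral_diff p1)
qed

lemmas H1 = sg_pos h1m h1b h10
lemmas H2 = sg_pos h2m h2b h20

definition "v1 = e2 h1 sg"
definition "v2 = e2 h2 sg"
definition "q4 = e4 h1 sg"

lemma v1_nn: "0 \<le> v1" unfolding v1_def e2_def[OF H1] by simp
lemma v2_nn: "0 \<le> v2" unfolding v2_def e2_def[OF H2] by simp
lemma q4_nn: "0 \<le> q4" unfolding q4_def e4_def[OF H1] by (simp add: zero_le_even_power)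

lemma gv: "gauss_vec n c = PP sg n"
  unfolding gauss_vec_def PP_def NN_def sg_def ..

lemma S1e: "S h1 n x = l1 n x - real n * mm"
  by (subst S_def[OF H1]) (simp add: l1_def h1_def sum_subtractf)

lemma S2e: "S h2 n x = (l2 n x)\<^sup>2 - real n * sg\<^sup>2"
  by (subst S_def[OF H2]) (simp add: l2_facts(4) h2_def sum_subtractf)


definition "C1 = 4/mm\<^sup>2 * v1 + (4/sg^4 + 4/(mm\<^sup>2* sg\<^sup>2)) * v2"
definition "C2 = 8* sg\<^sup>2/mm^4 * v1 + 8/(mm\<^sup>2* sg\<^sup>2) * v2 + 16*(2 + 2* sg\<^sup>2/mm\<^sup>2)/mm^4 * (q4 + 3* v1\<^sup>2)"

lemma main_n:
  assumes n: "n \<ge> 1"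
  shows "var (gauss_vec n c) (\<lambda>x. l1_hat n c x / l2_hat n c x) \<le> C1 / real n"
    and "var (gauss_vec n c) (\<lambda>x. l2_hat n c x / l1_hat n c x) \<le> C2 / real n"
proof -
  define M where "M = PP sg n"
  define N where "N = real n"
  have N: "N \<ge> 1" using n by (simp add: N_def)
  have sN: "sqrt N > 0" using N by simp
  interpret prob_space M unfolding M_def by (rule PP_prob[OF sg_pos])
  have p1: "prob (space M) = 1" by (rule prob_space)
  have gM: "gauss_vec n c = M" unfolding M_def by (rule gv)
  note sg = sg_pos and m = mm_pos and ms = mm_le
  have S1m[measurable]: "S h1 n \<in> borel_measurable M" unfolding M_def by (rule S_meas[OF H1])
  have S2m[measurable]: "S h2 n \<in> borel_measurable M" unfolding M_def by (rule S_meas[OF H2])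
  have iS1: "integrable M (S h1 n)" unfolding M_def by (rule S_int[OF H1])
  have iS1s: "integrable M (\<lambda>x. (S h1 n x)\<^sup>2)" unfolding M_def by (rule S2_int[OF H1])
  have iS1q: "integrable M (\<lambda>x. (S h1 n x)^4)" unfolding M_def by (rule S4_int[OF H1])
  have iS2: "integrable M (S h2 n)" unfolding M_def by (rule S_int[OF H2])
  have iS2s: "integrable M (\<lambda>x. (S h2 n x)\<^sup>2)" unfolding M_def by (rule S2_int[OF H2])
  have ES1a: "(\<integral>x. S h1 n x \<partial>M) = 0" unfolding M_def by (rule ES1[OF H1])
  have ES2a: "(\<integral>x. (S h1 n x)\<^sup>2 \<partial>M) = N * v1" unfolding M_def N_def v1_def by (rule ES2[OF H1])
  have ES4a: "(\<integral>x. (S h1 n x)^4 \<partial>M) = N * q4 + 3 * N * (N - 1) * v1\<^sup>2"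
    unfolding M_def N_def v1_def q4_def by (rule ES4[OF H1])
  have ES1b: "(\<integral>x. S h2 n x \<partial>M) = 0" unfolding M_def by (rule ES1[OF H2])
  have ES2b: "(\<integral>x. (S h2 n x)\<^sup>2 \<partial>M) = N * v2" unfolding M_def N_def v2_def by (rule ES2[OF H2])

  have l1e: "l1 n = (\<lambda>x. S h1 n x + N * mm)" using S1e by (simp add: N_def fun_eq_iff)
  have Qe: "(\<lambda>x. (l2 n x)\<^sup>2) = (\<lambda>x. S h2 n x + N * sg\<^sup>2)" using S2e by (simp add: N_def fun_eq_iff)
  have il1: "integrable M (l1 n)" unfolding l1e using iS1 by simp
  have El1: "(\<integral>x. l1 n x \<partial>M) = N * mm" unfolding l1e using iS1 ES1a p1
    by (simp add: Bochner_Integration.integral_add)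
  have iQ: "integrable M (\<lambda>x. (l2 n x)\<^sup>2)" unfolding Qe using iS2 by simp
  have EQ: "(\<integral>x. (l2 n x)\<^sup>2 \<partial>M) = N * sg\<^sup>2" unfolding Qe using iS2 ES1b p1
    by (simp add: Bochner_Integration.integral_add)
  have l1m[measurable]: "l1 n \<in> borel_measurable M" unfolding l1_def M_def PP_def by measurable
  have l2m[measurable]: "l2 n \<in> borel_measurable M" unfolding l2_def M_def PP_def by measurable
  have il2: "integrable M (l2 n)"
  proof (rule Bochner_Integration.integrable_bound[OF il1 l2m])
    show "AE x in M. norm (l2 n x) \<le> norm (l1 n x)"
    proof (rule AE_I2)
      fix x
      have "\<bar>l2 n x\<bar> \<le> \<bar>l1 n x\<bar>" using l2_facts(1,2)[of n x] by linarith
      then show "norm (l2 n x) \<le> norm (l1 n x)" by simp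
    qed
  qed
  define a where "a = expect (gauss_vec n c) (l1 n)"
  define b where "b = expect (gauss_vec n c) (l2 n)"
  have adef: "a = N * mm" unfolding a_def expect_def gM El1 ..
  have a: "a > 0" using N m adef by simp
  have bl: "sqrt N * mm \<le> b"
  proof -
    have "(\<integral>x. l1 n x \<partial>M) \<le> (\<integral>x. sqrt N * l2 n x \<partial>M)"
      using il1 il2 l2_facts(3) by (intro integral_mono) (auto simp: N_def)
    then have "N * mm \<le> sqrt N * b" unfolding El1 b_def expect_def gM by simp
    moreover have "sqrt N * sqrt N = N" using N by simp
    then have "sqrt N * (sqrt N * mm) = N * mm" by (metis mult.assoc)
    ultimately have "sqrt N * (sqrt N * mm) \<le> sqrt N * b" by linarith
    then show ?thesis using sN by simp
  qed
  have b: "b > 0" using bl mult_pos_pos[OF sN m] by linarith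
  have bs: "b\<^sup>2 \<le> N * sg\<^sup>2"
  proof -
    have "0 \<le> (\<integral>x. (l2 n x - b)\<^sup>2 \<partial>M)" by (intro Bochner_Integration.integral_nonneg) auto
    also have "\<dots> = N * sg\<^sup>2 - 2 * b * b + b\<^sup>2"
      using sq_expand[OF prob_space_axioms il2 iQ, of b] unfolding EQ
      by (simp add: b_def expect_def gM)
    finally show ?thesis by (simp add: power2_eq_square)
  qed
  have F1e: "(\<lambda>x. l1_hat n c x / l2_hat n c x) = (\<lambda>x. (l1 n x / a) / (l2 n x / b))"
    unfolding l1_hat_def l2_hat_def a_def b_def ..
  have F2e: "(\<lambda>x. l2_hat n c x / l1_hat n c x) = (\<lambda>x. (l2 n x / b) / (l1 n x / a))"
    unfolding l1_hat_def l2_hat_def a_def b_def ..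

  define t1 where "t1 = b / a * (sqrt N * mm / sg)"
  define F1 where "F1 = (\<lambda>x. (l1 n x / a) / (l2 n x / b))"
  have F1m[measurable]: "F1 \<in> borel_measurable M" unfolding F1_def by measurable
  have F1b: "\<bar>F1 x\<bar> \<le> b / a * sqrt N" for x
  proof -
    have e0: "F1 x = (b/a) * (l1 n x / l2 n x)" unfolding F1_def
      by (cases "l2 n x = 0") (simp_all add: field_simps)
    have r0: "0 \<le> l1 n x / l2 n x" using l2_facts(1,2)[of n x] by simp
    have r1: "l1 n x / l2 n x \<le> sqrt N"
    proof (cases "l2 n x = 0")
      case True then show ?thesis using sN by simp
    next
      case False then show ?thesis using l2_facts(1,3)[of n x] by (simp add: divide_le_eq mult.commute N_def)
    qed
    have "\<bar>(b/a) * (l1 n x / l2 n x)\<bar> = (b/a) * (l1 n x / l2 n x)"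
      using r0 a b by (intro abs_of_nonneg mult_nonneg_nonneg) auto
    also have "\<dots> \<le> (b/a) * sqrt N" using r1 a b by (intro mult_left_mono) auto
    finally show ?thesis unfolding e0 by simp
  qed
  have F1pt: "(F1 x - t1)\<^sup>2 \<le> (4/mm\<^sup>2/N\<^sup>2) * (S h1 n x)\<^sup>2 + ((4/sg^4 + 4/(mm\<^sup>2* sg\<^sup>2))/N\<^sup>2) * (S h2 n x)\<^sup>2" for x
  proof -
    have "(F1 x - t1)\<^sup>2 \<le> (4/mm\<^sup>2 * (l1 n x - N*mm)\<^sup>2 + (4/sg^4 + 4/(mm\<^sup>2* sg\<^sup>2)) * ((l2 n x)\<^sup>2 - N* sg\<^sup>2)\<^sup>2) / N\<^sup>2"
      unfolding F1_def t1_def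
      by (rule P1[OF N m sg ms l2_facts(1,2) l2_facts(3)[of n x, folded N_def] adef b bs])
    also have "\<dots> = (4/mm\<^sup>2/N\<^sup>2) * (S h1 n x)\<^sup>2 + ((4/sg^4 + 4/(mm\<^sup>2* sg\<^sup>2))/N\<^sup>2) * (S h2 n x)\<^sup>2"
      unfolding S1e S2e N_def by (rule lin2)
    finally show ?thesis .
  qed
  have "var M F1 \<le> (\<integral>x. (F1 x - t1)\<^sup>2 \<partial>M)"
    using bounded_int[OF prob_space_axioms F1m F1b] by (intro var_le[OF prob_space_axioms])
  also have "\<dots> \<le> (\<integral>x. (4/mm\<^sup>2/N\<^sup>2) * (S h1 n x)\<^sup>2 + ((4/sg^4 + 4/(mm\<^sup>2* sg\<^sup>2))/N\<^sup>2) * (S h2 n x)\<^sup>2 \<partial>M)"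
  proof (rule integral_mono)
    have "\<bar>F1 x - t1\<bar> \<le> b / a * sqrt N + \<bar>t1\<bar>" for x using F1b[of x] by linarith
    then show "integrable M (\<lambda>x. (F1 x - t1)\<^sup>2)"
      by (rule bounded_int(2)[OF prob_space_axioms, rotated]) measurable
    show "integrable M (\<lambda>x. (4/mm\<^sup>2/N\<^sup>2) * (S h1 n x)\<^sup>2 + ((4/sg^4 + 4/(mm\<^sup>2* sg\<^sup>2))/N\<^sup>2) * (S h2 n x)\<^sup>2)"
      using iS1s iS2s by simp
  qed (rule F1pt)
  also have "\<dots> = (4/mm\<^sup>2/N\<^sup>2) * (N * v1) + ((4/sg^4 + 4/(mm\<^sup>2* sg\<^sup>2))/N\<^sup>2) * (N * v2)"
    using iS1s iS2s by (simp add: Bochner_Integration.integral_add ES2a ES2b)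
  also have "\<dots> = C1 / N" unfolding C1_def using N by (simp add: field_simps power2_eq_square)
  finally show "var (gauss_vec n c) (\<lambda>x. l1_hat n c x / l2_hat n c x) \<le> C1 / real n"
    unfolding gM F1e F1_def[symmetric] N_def .

  define D where "D = 2 + 2 * sg\<^sup>2 / mm\<^sup>2"
  define t2 where "t2 = a / b / (sqrt N * mm / sg)"
  define F2 where "F2 = (\<lambda>x. (l2 n x / b) / (l1 n x / a))"
  have F2m[measurable]: "F2 \<in> borel_measurable M" unfolding F2_def by measurable
  have F2b: "\<bar>F2 x\<bar> \<le> a / b" for x
  proof -
    have e0: "F2 x = (a/b) * (l2 n x / l1 n x)" unfolding F2_def
      by (cases "l1 n x = 0") (simp_all add: field_simps)
    have r0: "0 \<le> l2 n x / l1 n x" using l2_facts(1,2)[of n x] by simp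
    have r1: "l2 n x / l1 n x \<le> 1"
      by (cases "l1 n x = 0") (use l2_facts(1,2)[of n x] in \<open>auto simp: divide_le_eq\<close>)
    have "\<bar>(a/b) * (l2 n x / l1 n x)\<bar> = (a/b) * (l2 n x / l1 n x)"
      using r0 a b by (intro abs_of_nonneg mult_nonneg_nonneg) auto
    also have "\<dots> \<le> (a/b) * 1" using r1 a b by (intro mult_left_mono) auto
    finally show ?thesis unfolding e0 by simp
  qed
  define K1 where "K1 = 8 * sg\<^sup>2 / mm^4 / N\<^sup>2"
  define K2 where "K2 = 8 / (mm\<^sup>2 * sg\<^sup>2) / N\<^sup>2"
  define K3 where "K3 = 16 * D / mm^4 / N^3"
  have F2pt: "(F2 x - t2)\<^sup>2 \<le> K1 * (S h1 n x)\<^sup>2 + K2 * (S h2 n x)\<^sup>2 + K3 * (S h1 n x)^4" for x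
  proof -
    have "(F2 x - t2)\<^sup>2 \<le> 8 * sg\<^sup>2 / mm^4 * (l1 n x - N*mm)\<^sup>2 / N\<^sup>2 + 8 / (mm\<^sup>2 * sg\<^sup>2) * ((l2 n x)\<^sup>2 - N* sg\<^sup>2)\<^sup>2 / N\<^sup>2
       + 16 * (2 + 2 * sg\<^sup>2 / mm\<^sup>2) / mm^4 * (l1 n x - N*mm)^4 / N^3"
      unfolding F2_def t2_def
      by (rule P2[OF N m sg ms l2_facts(1,2) l2_facts(3)[of n x, folded N_def] adef bl])
    also have "\<dots> = K1 * (S h1 n x)\<^sup>2 + K2 * (S h2 n x)\<^sup>2 + K3 * (S h1 n x)^4"
      unfolding S1e S2e K1_def K2_def K3_def D_def N_def by simp
    finally show ?thesis .
  qed
  have "var M F2 \<le> (\<integral>x. (F2 x - t2)\<^sup>2 \<partial>M)"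
    using bounded_int[OF prob_space_axioms F2m F2b] by (intro var_le[OF prob_space_axioms])
  also have "\<dots> \<le> (\<integral>x. K1 * (S h1 n x)\<^sup>2 + K2 * (S h2 n x)\<^sup>2 + K3 * (S h1 n x)^4 \<partial>M)"
  proof (rule integral_mono)
    have "\<bar>F2 x - t2\<bar> \<le> a / b + \<bar>t2\<bar>" for x using F2b[of x] by linarith
    then show "integrable M (\<lambda>x. (F2 x - t2)\<^sup>2)"
      by (rule bounded_int(2)[OF prob_space_axioms, rotated]) measurable
    show "integrable M (\<lambda>x. K1 * (S h1 n x)\<^sup>2 + K2 * (S h2 n x)\<^sup>2 + K3 * (S h1 n x)^4)"
      using iS1s iS2s iS1q by simp
  qed (rule F2pt)
  also have "\<dots> = K1 * (N * v1) + K2 * (N * v2) + K3 * (N * q4 + 3 * N * (N - 1) * v1\<^sup>2)"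
    using iS1s iS2s iS1q by (simp add: Bochner_Integration.integral_add ES2a ES2b ES4a)
  also have "\<dots> \<le> C2 / N"
  proof -
    have D0: "D > 0" unfolding D_def using m by (simp add: add_pos_nonneg)
    have "N * q4 + 3 * N * (N - 1) * v1\<^sup>2 \<le> N\<^sup>2 * (q4 + 3 * v1\<^sup>2)"
    proof -
      have "N * q4 \<le> N\<^sup>2 * q4" using N q4_nn by (intro mult_right_mono) (auto simp: power2_eq_square)
      moreover have "3 * N * (N - 1) * v1\<^sup>2 \<le> N\<^sup>2 * (3 * v1\<^sup>2)"
      proof -
        have h: "3 * N * (N - 1) * v1\<^sup>2 = (N*(N-1)) * (3* v1\<^sup>2)" by (simp add: algebra_simps)
        have "N*(N-1) \<le> N\<^sup>2" using N by (simp add: power2_eq_square algebra_simps)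
        then show ?thesis unfolding h by (intro mult_right_mono) auto
      qed
      ultimately show ?thesis by (simp add: algebra_simps)
    qed
    then have "K3 * (N * q4 + 3 * N * (N - 1) * v1\<^sup>2) \<le> K3 * (N\<^sup>2 * (q4 + 3 * v1\<^sup>2))"
      using D0 m N unfolding K3_def by (intro mult_left_mono) auto
    moreover have "K1 * (N * v1) + K2 * (N * v2) + K3 * (N\<^sup>2 * (q4 + 3 * v1\<^sup>2)) = C2 / N"
      unfolding C2_def K1_def K2_def K3_def D_def using N m sg
      by (simp add: field_simps power2_eq_square power3_eq_cube)
    ultimately show ?thesis by linarith
  qed
  finally show "var (gauss_vec n c) (\<lambda>x. l2_hat n c x / l1_hat n c x) \<le> C2 / real n"
    unfolding gM F2e F2_def[symmetric] N_def .
qed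

end

theorem theorem2:
  fixes c :: real
  assumes "c \<noteq> 0"
  shows "\<exists>C. \<forall>n::nat. n \<ge> 1 \<longrightarrow>
           max (var (gauss_vec n c) (\<lambda>x. l2_hat n c x / l1_hat n c x))
               (var (gauss_vec n c) (\<lambda>x. l1_hat n c x / l2_hat n c x))
           \<le> C / real n"
proof (intro exI[of _ "max (C2 c) (C1 c)"] allI impI)
  fix n :: nat
  assume n: "n \<ge> 1"
  have np: "real n > 0" using n by simp
  have "var (gauss_vec n c) (\<lambda>x. l2_hat n c x / l1_hat n c x) \<le> C2 c / real n"
    by (rule main_n(2)[OF assms n])
  also have "\<dots> \<le> max (C2 c) (C1 c) / real n" using np by (intro divide_right_mono) auto
  finally have 1: "var (gauss_vec n c) (\<lambda>x. l2_hat n c x / l1_hat n c x) \<le> max (C2 c) (C1 c) / real n" .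
  have "var (gauss_vec n c) (\<lambda>x. l1_hat n c x / l2_hat n c x) \<le> C1 c / real n"
    by (rule main_n(1)[OF assms n])
  also have "\<dots> \<le> max (C2 c) (C1 c) / real n" using np by (intro divide_right_mono) auto
  finally have 2: "var (gauss_vec n c) (\<lambda>x. l1_hat n c x / l2_hat n c x) \<le> max (C2 c) (C1 c) / real n" .
  show "max (var (gauss_vec n c) (\<lambda>x. l2_hat n c x / l1_hat n c x))
               (var (gauss_vec n c) (\<lambda>x. l1_hat n c x / l2_hat n c x))
           \<le> max (C2 c) (C1 c) / real n" using 1 2 by simp
qed

end
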